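(* Let $1\leq p\leq\infty$, let $\mathcal{M}$ be a $\mathrm{C}^{p+1}$-manifold of dimension $n\geq1$, let $\mathcal{V}$ be a complete $\mathrm{C}^p$-vector field on $\mathcal{M}$ every integral curve of which is periodic (constant integral curves included), let $\mathcal{B}$ be a complex Banach space, and let $\lambda\in\mathbb{C}$ with $\mathrm{Re}\,\lambda\neq0$. Then for every $\epsilon\geq0$ and every $y\in\mathrm{C}^1_{\mathcal{V}}(\mathcal{M};\mathcal{B})$ satisfying $\|\mathcal{V}y-\lambda y\|_\infty\leq\epsilon$, one has $\|y\|_\infty\leq\epsilon|\mathrm{Re}\,\lambda|^{-1}$.
   Context: $\|g\|_\infty=\sup_{x\in\mathcal{M}}\|g(x)\|$. For a map $y:\mathcal{M}\to\mathcal{B}$ that is differentiable along every integral curve of $\mathcal{V}$, $\mathcal{V}y(x)=(y\circ\gamma_x)'(0)$, where $\gamma_x$ is the integral curve of $\mathcal{V}$ with $\gamma_x(0)=x$. $\mathrm{C}^1_{\mathcal{V}}(\mathcal{M};\mathcal{B})$ denotes the set of maps $y:\mathcal{M}\to\mathcal{B}$ that are continuous, differentiable along every integral curve of $\mathcal{V}$, and such that $\mathcal{V}y$ is continuous. A vector field is complete if its flow is defined on all of $\mathbb{R}\times\mathcal{M}$. *)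

theory Defs
  imports "HOL-Analysis.Analysis" "HOL-Library.Extended_Nat"
begin

fun Ck :: "nat \<Rightarrow> 'a::real_normed_vector set \<Rightarrow> ('a \<Rightarrow> 'b::real_normed_vector) \<Rightarrow> bool" where
  "Ck 0 S f = continuous_on S f"
| "Ck (Suc k) S f = ((\<forall>x\<in>S. f differentiable (at x)) \<and>
       (\<forall>v. Ck k S (\<lambda>x. frechet_derivative f (at x) v)))"

definition Cp :: "enat \<Rightarrow> 'a::real_normed_vector set \<Rightarrow> ('a \<Rightarrow> 'b::real_normed_vector) \<Rightarrow> bool" where
  "Cp p S f = (\<forall>k::nat. enat k \<le> p \<longrightarrow> Ck k S f)"

type_synonym ('m, 'n) chart = "'m set \<times> ('m \<Rightarrow> real ^ 'n)"

definition is_chart :: "('m::topological_space, 'n::finite) chart \<Rightarrow> bool" where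
  "is_chart c = (case c of (U, \<psi>) \<Rightarrow>
      open U \<and> inj_on \<psi> U \<and> open (\<psi> ` U) \<and> continuous_on U \<psi> \<and>
      continuous_on (\<psi> ` U) (inv_into U \<psi>))"

definition Ck_atlas :: "enat \<Rightarrow> ('m::topological_space, 'n::finite) chart set \<Rightarrow> bool" where
  "Ck_atlas k A = ((\<forall>c\<in>A. is_chart c) \<and> (\<Union>c\<in>A. fst c) = UNIV \<and>
     (\<forall>(U,\<psi>)\<in>A. \<forall>(V,\<phi>)\<in>A. Cp k (\<psi> ` (U \<inter> V)) (\<phi> \<circ> inv_into U \<psi>)))"

text \<open>A vector field is given by its local representatives X c x \<in> real^'n (the components
  of the tangent vector at x in the chart c), subject to the transformation rule between
  charts; it is C^p if all local representatives are C^p in the chart coordinates.\<close>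
definition Cp_vector_field ::
  "enat \<Rightarrow> ('m::topological_space, 'n::finite) chart set \<Rightarrow>
   (('m, 'n) chart \<Rightarrow> 'm \<Rightarrow> real ^ 'n) \<Rightarrow> bool" where
  "Cp_vector_field p A X =
    ((\<forall>(U,\<psi>)\<in>A. Cp p (\<psi> ` U) (\<lambda>u. X (U,\<psi>) (inv_into U \<psi> u))) \<and>
     (\<forall>(U,\<psi>)\<in>A. \<forall>(V,\<phi>)\<in>A. \<forall>x\<in>U \<inter> V.
        X (V,\<phi>) x = frechet_derivative (\<phi> \<circ> inv_into U \<psi>) (at (\<psi> x)) (X (U,\<psi>) x)))"

definition integral_curve ::
  "('m::topological_space, 'n::finite) chart set \<Rightarrow> (('m, 'n) chart \<Rightarrow> 'm \<Rightarrow> real ^ 'n) \<Rightarrow>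
   (real \<Rightarrow> 'm) \<Rightarrow> bool" where
  "integral_curve A X \<gamma> = (continuous_on UNIV \<gamma> \<and>
     (\<forall>t. \<forall>(U,\<psi>)\<in>A. \<gamma> t \<in> U \<longrightarrow>
        ((\<psi> \<circ> \<gamma>) has_vector_derivative X (U,\<psi>) (\<gamma> t)) (at t)))"

definition complete_vf :: "('m::topological_space, 'n::finite) chart set \<Rightarrow>
   (('m, 'n) chart \<Rightarrow> 'm \<Rightarrow> real ^ 'n) \<Rightarrow> bool" where
  "complete_vf A X = (\<forall>x. \<exists>\<gamma>. integral_curve A X \<gamma> \<and> \<gamma> 0 = x)"

definition all_orbits_periodic :: "('m::topological_space, 'n::finite) chart set \<Rightarrow>
   (('m, 'n) chart \<Rightarrow> 'm \<Rightarrow> real ^ 'n) \<Rightarrow> bool" where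
  "all_orbits_periodic A X =
     (\<forall>\<gamma>. integral_curve A X \<gamma> \<longrightarrow> (\<exists>T>0. \<forall>t. \<gamma> (t + T) = \<gamma> t))"

definition lie_deriv :: "('m::topological_space, 'n::finite) chart set \<Rightarrow>
   (('m, 'n) chart \<Rightarrow> 'm \<Rightarrow> real ^ 'n) \<Rightarrow> ('m \<Rightarrow> 'b::real_normed_vector) \<Rightarrow> 'm \<Rightarrow> 'b" where
  "lie_deriv A X y x =
     vector_derivative (y \<circ> (SOME \<gamma>. integral_curve A X \<gamma> \<and> \<gamma> 0 = x)) (at 0)"

definition C1_V :: "('m::topological_space, 'n::finite) chart set \<Rightarrow>
   (('m, 'n) chart \<Rightarrow> 'm \<Rightarrow> real ^ 'n) \<Rightarrow> ('m \<Rightarrow> 'b::real_normed_vector) \<Rightarrow> bool" where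
  "C1_V A X y = (continuous_on UNIV y \<and>
     (\<forall>\<gamma>. integral_curve A X \<gamma> \<longrightarrow> (\<forall>t. (y \<circ> \<gamma>) differentiable (at t))) \<and>
     continuous_on UNIV (lie_deriv A X y))"

text \<open>A complex Banach space is a real Banach space 'b together with a real-linear J
  (multiplication by i) with J (J v) = -v and norm ((a + i b) v) = |a + i b| norm v.\<close>
definition complex_structure :: "('b::real_normed_vector \<Rightarrow> 'b) \<Rightarrow> bool" where
  "complex_structure J = (linear J \<and> (\<forall>v. J (J v) = - v) \<and>
     (\<forall>a b v. norm (a *\<^sub>R v + b *\<^sub>R J v) = cmod (Complex a b) * norm v))"

definition cscale :: "('b::real_normed_vector \<Rightarrow> 'b) \<Rightarrow> complex \<Rightarrow> 'b \<Rightarrow> 'b" where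
  "cscale J z v = Re z *\<^sub>R v + Im z *\<^sub>R J v"

end

theory Submission
  imports Defs
begin

lemma shift_vd:
  assumes "(f has_vector_derivative v) (at (t+x))"
  shows "((\<lambda>s. f (t+s)) has_vector_derivative v) (at x)"
proof -
  have "((\<lambda>s. t+s) has_derivative id) (at x)" by (auto intro!: derivative_eq_intros simp: id_def)
  from diff_chain_at[OF this assms[unfolded has_vector_derivative_def]]
  show ?thesis by (simp add: has_vector_derivative_def comp_def id_def)
qed

lemma splice_deriv:
  assumes g: "integral_curve A X \<gamma>" and d: "integral_curve A X \<delta>" and e: "\<delta> 0 = \<gamma> t"
    and c: "(U,\<psi>) \<in> A" and inU: "(if x \<in> {..0} then \<gamma> (t+x) else \<delta> x) \<in> U"
  shows "((\<psi> \<circ> (\<lambda>s. if s \<in> {..0} then \<gamma> (t+s) else \<delta> s)) has_vector_derivative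
        X (U,\<psi>) (if x \<in> {..0} then \<gamma> (t+x) else \<delta> x)) (at x)"
proof -
  have gd: "\<And>s. \<gamma> s \<in> U \<Longrightarrow> ((\<psi> \<circ> \<gamma>) has_vector_derivative X (U,\<psi>) (\<gamma> s)) (at s)"
    using g c by (auto simp: integral_curve_def)
  have dd: "\<And>s. \<delta> s \<in> U \<Longrightarrow> ((\<psi> \<circ> \<delta>) has_vector_derivative X (U,\<psi>) (\<delta> s)) (at s)"
    using d c by (auto simp: integral_curve_def)
  have cl: "closure {..0::real} \<inter> closure {0<..} = {0}" by auto
  have eq: "\<psi> \<circ> (\<lambda>s. if s \<in> {..0} then \<gamma> (t+s) else \<delta> s) = (\<lambda>s. if s \<in> {..0} then (\<lambda>s. \<psi> (\<gamma> (t+s))) s else (\<psi> \<circ> \<delta>) s)"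
    by (auto simp: fun_eq_iff)
  have "((\<lambda>s. if s \<in> {..0} then (\<lambda>s. \<psi> (\<gamma> (t+s))) s else (\<psi> \<circ> \<delta>) s) has_vector_derivative
     (if x \<in> {..0} then (\<lambda>s. X (U,\<psi>) (\<gamma> (t+s))) x else (\<lambda>s. X (U,\<psi>) (\<delta> s)) x)) (at x within UNIV)"
  proof (rule has_vector_derivative_If_within_closures[where T="{0<..}" and S="{..0}" and f="\<lambda>s. \<psi> (\<gamma> (t+s))" and g="\<psi> \<circ> \<delta>"
        and f'="\<lambda>s. X (U,\<psi>) (\<gamma> (t+s))" and g'="\<lambda>s. X (U,\<psi>) (\<delta> s)" and u=UNIV and x=x])
    show "x \<in> {..0} \<union> {0<..}" by auto
    show "UNIV = {..0::real} \<union> {0<..}" by auto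
    show "((\<lambda>s. \<psi> (\<gamma> (t + s))) has_vector_derivative X (U, \<psi>) (\<gamma> (t + x))) (at x within {..0} \<union> (closure {..0} \<inter> closure {0<..}))"
      if "x \<in> {..0} \<union> (closure {..0} \<inter> closure {0<..})"
    proof -
      have "x \<le> 0" using that by (simp add: cl)
      then have "\<gamma> (t+x) \<in> U" using inU by simp
      note h1 = gd[OF this]
      note h2 = shift_vd[OF h1]
      have h3: "((\<lambda>s. \<psi> (\<gamma> (t+s))) has_vector_derivative X (U, \<psi>) (\<gamma> (t + x))) (at x)" using h2 by (simp only: comp_def)
      show ?thesis by (rule has_vector_derivative_at_within[OF h3])
    qed
    show "((\<psi> \<circ> \<delta>) has_vector_derivative X (U, \<psi>) (\<delta> x)) (at x within {0<..} \<union> (closure {..0} \<inter> closure {0<..}))"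
      if "x \<in> {0<..} \<union> (closure {..0} \<inter> closure {0<..})"
    proof -
      have "x \<ge> 0" using that by (auto simp add: cl)
      then have "\<delta> x \<in> U" using inU e by (cases "x = 0") auto
      from dd[OF this] show ?thesis
        by (rule has_vector_derivative_at_within)
    qed
    show "\<psi> (\<gamma> (t + x)) = (\<psi> \<circ> \<delta>) x" if "x \<in> closure {..0}" "x \<in> closure {0<..}"
      using that e by auto
    show "X (U, \<psi>) (\<gamma> (t + x)) = X (U, \<psi>) (\<delta> x)" if "x \<in> closure {..0}" "x \<in> closure {0<..}"
      using that e by auto
  qed
  then show ?thesis
    unfolding eq by (simp add: if_distrib[of "X (U,\<psi>)"])
qed


lemma splice_curve:
  assumes g: "integral_curve A X \<gamma>" and d: "integral_curve A X \<delta>" and e: "\<delta> 0 = \<gamma> t"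
  shows "integral_curve A X (\<lambda>s. if s \<in> {..0} then \<gamma> (t+s) else \<delta> s)"
  unfolding integral_curve_def
proof (intro conjI)
  have cg: "continuous_on UNIV \<gamma>" "continuous_on UNIV \<delta>" using g d by (auto simp: integral_curve_def)
  have c1: "continuous_on UNIV (\<lambda>s. \<gamma> (t+s))"
    by (rule continuous_on_compose2[OF cg(1)]) (auto intro!: continuous_intros)
  have "continuous_on UNIV (\<lambda>s. if s \<le> 0 then \<gamma> (t+s) else \<delta> s)"
    by (rule continuous_on_cases_le) (auto intro: continuous_on_subset[OF c1] continuous_on_subset[OF cg(2)] simp: e continuous_on_id)
  then show "continuous_on UNIV (\<lambda>s. if s \<in> {..0} then \<gamma> (t+s) else \<delta> s)" by simp
next
  show "\<forall>x. \<forall>(U,\<psi>)\<in>A. (if x \<in> {..0} then \<gamma> (t+x) else \<delta> x) \<in> U \<longrightarrow>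
        ((\<psi> \<circ> (\<lambda>s. if s \<in> {..0} then \<gamma> (t+s) else \<delta> s)) has_vector_derivative
        X (U,\<psi>) (if x \<in> {..0} then \<gamma> (t+x) else \<delta> x)) (at x)"
    using splice_deriv[OF g d e] by blast
qed

lemma curve_deriv:
  assumes cv: "complete_vf A X" and C: "C1_V A X y" and g: "integral_curve A X \<gamma>"
  shows "((y \<circ> \<gamma>) has_vector_derivative lie_deriv A X y (\<gamma> t)) (at t)"
proof -
  define \<delta> where "\<delta> = (SOME \<delta>. integral_curve A X \<delta> \<and> \<delta> 0 = \<gamma> t)"
  have "\<exists>\<delta>. integral_curve A X \<delta> \<and> \<delta> 0 = \<gamma> t" using cv unfolding complete_vf_def by blast
  then have \<delta>: "integral_curve A X \<delta>" "\<delta> 0 = \<gamma> t" unfolding \<delta>_def by (metis (mono_tags, lifting) someI_ex)+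
  define \<sigma> where "\<sigma> = (\<lambda>s. if s \<in> {..0} then \<gamma> (t+s) else \<delta> s)"
  have \<sigma>: "integral_curve A X \<sigma>" unfolding \<sigma>_def by (rule splice_curve[OF g \<delta>(1) \<delta>(2)])
  have diff: "\<And>\<gamma> t. integral_curve A X \<gamma> \<Longrightarrow> (y \<circ> \<gamma>) differentiable (at t)"
    using C unfolding C1_V_def by blast
  obtain D where D: "((y \<circ> \<sigma>) has_vector_derivative D) (at 0)"
    using diff[OF \<sigma>] vector_derivative_works by blast
  obtain G where G: "((y \<circ> \<gamma>) has_vector_derivative G) (at t)"
    using diff[OF g] vector_derivative_works by blast
  have Ld: "((y \<circ> \<delta>) has_vector_derivative lie_deriv A X y (\<gamma> t)) (at 0)"
    unfolding lie_deriv_def \<delta>_def[symmetric] using diff[OF \<delta>(1)] vector_derivative_works by blast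
  have G0: "((\<lambda>s. (y \<circ> \<gamma>) (t+s)) has_vector_derivative G) (at 0)"
    using shift_vd[of "y \<circ> \<gamma>" G t 0] G by simp
  have GL: "((y \<circ> \<sigma>) has_vector_derivative G) (at 0 within {..<0})"
  proof -
    have "((y \<circ> \<sigma>) has_vector_derivative G) (at 0 within {..0})"
      by (rule has_vector_derivative_transform[OF _ _ has_vector_derivative_at_within[OF G0]]) (auto simp: \<sigma>_def)
    then show ?thesis by (rule has_vector_derivative_within_subset) auto
  qed
  have DL: "((y \<circ> \<sigma>) has_vector_derivative D) (at 0 within {..<0})"
    by (rule has_vector_derivative_at_within[OF D])
  have "G = D" by (rule vector_derivative_unique_within[OF _ GL DL]) (simp add: trivial_limit_at_left_real)
  have LR: "((y \<circ> \<sigma>) has_vector_derivative lie_deriv A X y (\<gamma> t)) (at 0 within {0<..})"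
  proof -
    have "((y \<circ> \<sigma>) has_vector_derivative lie_deriv A X y (\<gamma> t)) (at 0 within {0..})"
      by (rule has_vector_derivative_transform[OF _ _ has_vector_derivative_at_within[OF Ld]]) (auto simp: \<sigma>_def \<delta>(2))
    then show ?thesis by (rule has_vector_derivative_within_subset) auto
  qed
  have DR: "((y \<circ> \<sigma>) has_vector_derivative D) (at 0 within {0<..})"
    by (rule has_vector_derivative_at_within[OF D])
  have "lie_deriv A X y (\<gamma> t) = D" by (rule vector_derivative_unique_within[OF _ LR DR]) (simp add: trivial_limit_at_right_real)
  then show ?thesis using G \<open>G = D\<close> by simp
qed

lemma cs_norm:
  assumes "complex_structure J"
  shows "norm (v + k *\<^sub>R cscale J lam v) = cmod (Complex (1 + k * Re lam) (k * Im lam)) * norm v"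
proof -
  have "v + k *\<^sub>R cscale J lam v = (1 + k * Re lam) *\<^sub>R v + (k * Im lam) *\<^sub>R J v"
    by (simp add: cscale_def algebra_simps)
  then show ?thesis using assms unfolding complex_structure_def by metis
qed

lemma periodic_int:
  fixes \<gamma> :: "real \<Rightarrow> 'a"
  assumes per: "\<forall>t. \<gamma> (t + T) = \<gamma> t"
  shows "\<gamma> (t + of_int m * T) = \<gamma> t"
proof -
  have n: "\<gamma> (t + real n * T) = \<gamma> t" for n :: nat and t
  proof (induction n)
    case 0 then show ?case by simp
  next
    case (Suc n)
    have "\<gamma> (t + real (Suc n) * T) = \<gamma> ((t + real n * T) + T)" by (simp add: algebra_simps)
    also have "\<dots> = \<gamma> t" using per Suc by simp
    finally show ?case .
  qed
  show ?thesis
  proof (cases "m \<ge> 0")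
    case True
    then obtain n where "m = int n" by (metis nonneg_int_cases)
    then show ?thesis using n by simp
  next
    case False
    then obtain n where m: "m = - int n" by (metis nonneg_int_cases neg_0_le_iff_le nle_le minus_minus)
    have "\<gamma> t = \<gamma> ((t - real n * T) + real n * T)" by simp
    also have "\<dots> = \<gamma> (t - real n * T)" using n by blast
    finally show ?thesis using m by simp
  qed
qed

theorem corollary2p3:
  fixes p :: enat
    and A :: "('m::{t2_space, second_countable_topology}, 'n::finite) chart set"
    and X :: "('m, 'n) chart \<Rightarrow> 'm \<Rightarrow> real ^ 'n"
    and J :: "'b::banach \<Rightarrow> 'b"
    and lam :: complex and eps :: real
    and y :: "'m \<Rightarrow> 'b"
  assumes "1 \<le> p"
    and "Ck_atlas (p + 1) A"
    and "Cp_vector_field p A X"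
    and "complete_vf A X"
    and "all_orbits_periodic A X"
    and "complex_structure J"
    and "Re lam \<noteq> 0"
    and "eps \<ge> 0"
    and "C1_V A X y"
    and "\<forall>x. norm (lie_deriv A X y x - cscale J lam (y x)) \<le> eps"
  shows "\<forall>x. norm (y x) \<le> eps / \<bar>Re lam\<bar>"
proof
  fix x
  note assm = assms
  define r where "r = Re lam"
  have rpos: "\<bar>r\<bar> > 0" using assms(7) r_def by simp
  obtain \<gamma> where \<gamma>: "integral_curve A X \<gamma>" "\<gamma> 0 = x" using assms(4) unfolding complete_vf_def by blast
  obtain T where T: "T > 0" "\<forall>t. \<gamma> (t + T) = \<gamma> t" using assms(5) \<gamma>(1) unfolding all_orbits_periodic_def by blast
  define g where "g = y \<circ> \<gamma>"
  have cy: "continuous_on UNIV y" using assms(9) unfolding C1_V_def by blast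
  have cg0: "continuous_on UNIV \<gamma>" using \<gamma>(1) unfolding integral_curve_def by blast
  have cg: "continuous_on UNIV g" unfolding g_def by (rule continuous_on_compose[OF cg0 continuous_on_subset[OF cy]]) auto
  obtain t0 where t0: "t0 \<in> {0..T}" "\<forall>s\<in>{0..T}. norm (g s) \<le> norm (g t0)"
    using continuous_attains_sup[of "{0..T}" "\<lambda>s. norm (g s)"] T(1)
      continuous_on_norm[OF continuous_on_subset[OF cg]] by auto
  have gmax: "norm (g s) \<le> norm (g t0)" for s
  proof -
    define m where "m = \<lfloor>s / T\<rfloor>"
    define s' where "s' = s - of_int m * T"
    have "of_int m \<le> s / T" "s / T < of_int m + 1" unfolding m_def by linarith+
    then have "of_int m * T \<le> s" "s < (of_int m + 1) * T" using T(1) by (simp_all add: field_simps)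
    then have "s' \<in> {0..T}" unfolding s'_def by (auto simp: algebra_simps)
    moreover have "g s = g s'" unfolding g_def s'_def
      using periodic_int[OF T(2), of "s - of_int m * T" m] by simp
    ultimately show ?thesis using t0(2) by simp
  qed
  define D where "D = lie_deriv A X y (\<gamma> t0)"
  have Dg: "(g has_vector_derivative D) (at t0)" unfolding g_def D_def
    by (rule curve_deriv[OF assms(4) assms(9) \<gamma>(1)])
  define v0 where "v0 = g t0"
  have bnd: "norm (D - cscale J lam v0) \<le> eps" unfolding D_def v0_def g_def using assms(10) by simp
  have key: "\<bar>r\<bar> * norm v0 \<le> eps"
  proof (rule field_le_epsilon)
    fix e :: real assume e: "0 < e"
    from Dg[unfolded has_vector_derivative_def has_derivative_at_alt] e obtain d where
      d: "d > 0" "\<forall>s. norm (s - t0) < d \<longrightarrow> norm (g s - g t0 - (s - t0) *\<^sub>R D) \<le> e * norm (s - t0)"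
      by blast
    define k where "k = sgn r * (d / 2)"
    have ak: "\<bar>k\<bar> = d / 2" using rpos d(1) unfolding k_def by (auto simp: abs_mult sgn_if)
    have kr: "k * r = \<bar>k\<bar> * \<bar>r\<bar>" unfolding k_def using d(1) by (auto simp: sgn_if abs_mult)
    define E where "E = g (t0 + k) - g t0 - k *\<^sub>R D"
    have "norm ((t0 + k) - t0) < d" using ak d(1) by simp
    from d(2)[rule_format, OF this] have nE: "norm E \<le> e * \<bar>k\<bar>" unfolding E_def by simp
    have id: "v0 + k *\<^sub>R cscale J lam v0 = g (t0 + k) - k *\<^sub>R (D - cscale J lam v0) - E"
      unfolding E_def v0_def by (simp add: algebra_simps)
    have "norm (g (t0 + k) - k *\<^sub>R (D - cscale J lam v0) - E)
        \<le> norm (g (t0 + k)) + norm (k *\<^sub>R (D - cscale J lam v0)) + norm E"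
      by (metis (no_types, lifting) add_mono norm_triangle_ineq4 order_trans order_refl)
    also have "\<dots> \<le> norm v0 + \<bar>k\<bar> * eps + e * \<bar>k\<bar>"
      using gmax[of "t0 + k"] bnd nE unfolding v0_def
      by (intro add_mono) (auto intro: mult_left_mono)
    finally have calc: "norm (g (t0 + k) - k *\<^sub>R (D - cscale J lam v0) - E) \<le> norm v0 + \<bar>k\<bar> * eps + e * \<bar>k\<bar>" .
    have up: "norm (v0 + k *\<^sub>R cscale J lam v0) \<le> norm v0 + \<bar>k\<bar> * (eps + e)"
      unfolding id using calc by (simp add: distrib_left mult.commute)
    have "(1 + k * r) \<le> cmod (Complex (1 + k * Re lam) (k * Im lam))"
      using abs_Re_le_cmod[of "Complex (1 + k * Re lam) (k * Im lam)"] r_def by simp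
    then have "(1 + k * r) * norm v0 \<le> norm (v0 + k *\<^sub>R cscale J lam v0)"
      using cs_norm[OF assms(6)] by (simp add: mult_right_mono)
    with up have "\<bar>k\<bar> * (\<bar>r\<bar> * norm v0) \<le> \<bar>k\<bar> * (eps + e)" using kr by (simp add: algebra_simps)
    then show "\<bar>r\<bar> * norm v0 \<le> eps + e" using ak d(1) by simp
  qed
  have "norm (y x) \<le> norm v0" using gmax[of 0] \<gamma>(2) unfolding v0_def g_def by simp
  also have "\<dots> \<le> eps / \<bar>Re lam\<bar>" using key rpos unfolding r_def by (simp add: pos_le_divide_eq mult.commute)
  finally show "norm (y x) \<le> eps / \<bar>Re lam\<bar>" .
qed

end
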